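(* Let $(\mathfrak{h},[\,,\,],* )$ be a right Post-Lie algebra, let $(A_+,\cdot)$ be a non-unital associative algebra with a linear map $\rhd:A_+\otimes A_+\to A_+$, and let $\phi:\mathfrak{h}\to A_+$ be linear with $\phi([x,y])=\phi(x)\phi(y)-\phi(y)\phi(x)$ and $\phi(x*y)=\phi(x)\rhd\phi(y)$ for all $x,y\in\mathfrak{h}$. Let $A=\mathbb{K}1\oplus A_+$ be the unitization and extend $\rhd$ bilinearly to $A$ by $1\rhd x=0$, $x\rhd 1=x$ for $x\in A_+$, and $1\rhd 1=1$. Assume that for all $x,y$ in the subalgebra $\langle\mathrm{im}(\phi)\rangle$ of $A$ generated by $\mathrm{im}(\phi)$ and all $z\in\mathrm{im}(\phi)$: $(x\cdot y)\rhd z=(x\rhd z)\cdot y+x\cdot(y\rhd z)$ and $x\rhd(y\cdot z)=(x\rhd y)\rhd z-x\rhd(y\rhd z)$. Then there exists a unique algebra morphism $\Phi:\mathcal{U}(\mathfrak{h})\to A$ with $\Phi|_{\mathfrak{h}}=\phi$, and it satisfies for all $f,g,h\in\mathcal{U}(\mathfrak{h})$: $\Phi(f*g)=\Phi(f)\rhd\Phi(g)$; $(\Phi(f)\cdot\Phi(g))\rhd\Phi(h)=(\Phi(f)\rhd\Phi(h^{(1)}))\cdot(\Phi(g)\rhd\Phi(h^{(2)}))$; $(\Phi(f)\rhd\Phi(g))\rhd\Phi(h)=\Phi(f)\rhd\big((\Phi(g)\rhd\Phi(h^{(1)}))\cdot\Phi(h^{(2)})\big)$, where $*$ on $\mathcal{U}(\mathfrak{h})$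 is the extension described below.
   Context: A right Post-Lie algebra is a Lie algebra $(\mathfrak{h},[\,,\,])$ with bilinear $*$ such that $x*[y,z]=a_*(x,y,z)-a_*(x,z,y)$ and $[x,y]*z=[x*z,y]+[x,y*z]$, where $a_*(x,y,z)=(x*y)*z-x*(y*z)$. $\mathcal{U}(\mathfrak{h})$ is the enveloping algebra with coproduct $\Delta$ (elements of $\mathfrak{h}$ primitive), Sweedler notation $\Delta(h)=h^{(1)}\otimes h^{(2)}$. Extension (known fact): $*$ extends uniquely to $\mathcal{U}(\mathfrak{h})\otimes\mathcal{U}(\mathfrak{h})\to\mathcal{U}(\mathfrak{h})$ such that for all $f,g,h\in\mathcal{U}(\mathfrak{h})$, $y\in\mathfrak{h}$: $\varepsilon(f*g)=\varepsilon(f)\varepsilon(g)$; $\Delta(f*g)=\Delta(f)*\Delta(g)$; $f*1=f$; $1*f=\varepsilon(f)1$; $f*(gy)=(f*g)*y-f*(g*y)$; $(fg)*h=(f*h^{(1)})(g*h^{(2)})$; $(f*g)*h=f*\big((g*h^{(1)})h^{(2)}\big)$. *)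

theory Defs
  imports Complex_Main
begin

definition bilin ::
  "('k::field \<Rightarrow> 'a::ab_group_add \<Rightarrow> 'a) \<Rightarrow> ('k \<Rightarrow> 'b::ab_group_add \<Rightarrow> 'b)
   \<Rightarrow> ('k \<Rightarrow> 'c::ab_group_add \<Rightarrow> 'c) \<Rightarrow> ('a \<Rightarrow> 'b \<Rightarrow> 'c) \<Rightarrow> bool" where
  "bilin s1 s2 s3 f \<longleftrightarrow>
     (\<forall>x. Vector_Spaces.linear s2 s3 (f x)) \<and> (\<forall>y. Vector_Spaces.linear s1 s3 (\<lambda>x. f x y))"

definition lie_algebra ::
  "('k::field \<Rightarrow> 'h::ab_group_add \<Rightarrow> 'h) \<Rightarrow> ('h \<Rightarrow> 'h \<Rightarrow> 'h) \<Rightarrow> bool" where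
  "lie_algebra sh br \<longleftrightarrow> vector_space sh \<and> bilin sh sh sh br \<and>
     (\<forall>x. br x x = 0) \<and>
     (\<forall>x y z. br x (br y z) + br y (br z x) + br z (br x y) = 0)"

definition assoc_star :: "('h \<Rightarrow> 'h \<Rightarrow> 'h) \<Rightarrow> 'h \<Rightarrow> 'h \<Rightarrow> 'h \<Rightarrow> 'h::ab_group_add" where
  "assoc_star st x y z = st (st x y) z - st x (st y z)"

definition right_post_lie ::
  "('k::field \<Rightarrow> 'h::ab_group_add \<Rightarrow> 'h) \<Rightarrow> ('h \<Rightarrow> 'h \<Rightarrow> 'h) \<Rightarrow> ('h \<Rightarrow> 'h \<Rightarrow> 'h) \<Rightarrow> bool" where
  "right_post_lie sh br st \<longleftrightarrow> lie_algebra sh br \<and> bilin sh sh sh st \<and>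
     (\<forall>x y z. st x (br y z) = assoc_star st x y z - assoc_star st x z y) \<and>
     (\<forall>x y z. st (br x y) z = br (st x z) y + br x (st y z))"

definition nonunital_algebra :: "('k::field \<Rightarrow> 'a::ring \<Rightarrow> 'a) \<Rightarrow> bool" where
  "nonunital_algebra sa \<longleftrightarrow> vector_space sa \<and>
     (\<forall>c x y. sa c (x * y) = sa c x * y \<and> sa c (x * y) = x * sa c y)"

section \<open>The unitization A = K1 \<oplus> A_+, represented as pairs (c, x) meaning c 1 + x\<close>

type_synonym ('k, 'a) unitz = "'k \<times> 'a"

definition uz_one :: "('k::field, 'a::ring) unitz" where "uz_one = (1, 0)"
definition uz_zero :: "('k::field, 'a::ring) unitz" where "uz_zero = (0, 0)"
definition uz_incl :: "'a::ring \<Rightarrow> ('k::field, 'a) unitz" where "uz_incl x = (0, x)"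
definition uz_add :: "('k::field, 'a::ring) unitz \<Rightarrow> ('k, 'a) unitz \<Rightarrow> ('k, 'a) unitz" where
  "uz_add p q = (fst p + fst q, snd p + snd q)"
definition uz_sub :: "('k::field, 'a::ring) unitz \<Rightarrow> ('k, 'a) unitz \<Rightarrow> ('k, 'a) unitz" where
  "uz_sub p q = (fst p - fst q, snd p - snd q)"
definition uz_scale :: "('k::field \<Rightarrow> 'a::ring \<Rightarrow> 'a) \<Rightarrow> 'k \<Rightarrow> ('k, 'a) unitz \<Rightarrow> ('k, 'a) unitz" where
  "uz_scale sa c p = (c * fst p, sa c (snd p))"
text \<open>(c1 + x)(d1 + y) = cd 1 + (c y + d x + x y)\<close>
definition uz_mul :: "('k::field \<Rightarrow> 'a::ring \<Rightarrow> 'a) \<Rightarrow> ('k, 'a) unitz \<Rightarrow> ('k, 'a) unitz \<Rightarrow> ('k, 'a) unitz" where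
  "uz_mul sa p q = (fst p * fst q, sa (fst p) (snd q) + sa (fst q) (snd p) + snd p * snd q)"
text \<open>Bilinear extension of the product rhd with 1 rhd x = 0, x rhd 1 = x, 1 rhd 1 = 1:
  (c1 + x) rhd (d1 + y) = cd 1 + (d x + x rhd y).\<close>
definition uz_rhd :: "('k::field \<Rightarrow> 'a::ring \<Rightarrow> 'a) \<Rightarrow> ('a \<Rightarrow> 'a \<Rightarrow> 'a)
    \<Rightarrow> ('k, 'a) unitz \<Rightarrow> ('k, 'a) unitz \<Rightarrow> ('k, 'a) unitz" where
  "uz_rhd sa rhd p q = (fst p * fst q, sa (fst q) (snd p) + rhd (snd p) (snd q))"

definition uz_sum :: "('k::field, 'a::ring) unitz list \<Rightarrow> ('k, 'a) unitz" where
  "uz_sum ps = foldr uz_add ps uz_zero"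

inductive_set gen_subalg :: "('k::field \<Rightarrow> 'a::ring \<Rightarrow> 'a) \<Rightarrow> ('h \<Rightarrow> 'a) \<Rightarrow> ('k, 'a) unitz set"
  for sa phi where
  one: "uz_one \<in> gen_subalg sa phi"
| gen: "uz_incl (phi x) \<in> gen_subalg sa phi"
| add: "p \<in> gen_subalg sa phi \<Longrightarrow> q \<in> gen_subalg sa phi \<Longrightarrow> uz_add p q \<in> gen_subalg sa phi"
| scale: "p \<in> gen_subalg sa phi \<Longrightarrow> uz_scale sa c p \<in> gen_subalg sa phi"
| mul: "p \<in> gen_subalg sa phi \<Longrightarrow> q \<in> gen_subalg sa phi \<Longrightarrow> uz_mul sa p q \<in> gen_subalg sa phi"

datatype ('k, 'h) uterm = Gen 'h | One | Zero | Add "('k, 'h) uterm" "('k, 'h) uterm"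
  | Smul 'k "('k, 'h) uterm" | Mul "('k, 'h) uterm" "('k, 'h) uterm"

text \<open>U(h) = T(h) / (x y - y x - [x,y]): the congruence generated by the axioms of a
  unital associative K-algebra, linearity of the generator map, and the Lie relation.\<close>
inductive ueq :: "('k::field \<Rightarrow> 'h::ab_group_add \<Rightarrow> 'h) \<Rightarrow> ('h \<Rightarrow> 'h \<Rightarrow> 'h)
    \<Rightarrow> ('k, 'h) uterm \<Rightarrow> ('k, 'h) uterm \<Rightarrow> bool" for sh br where
  refl: "ueq sh br s s"
| sym: "ueq sh br s t \<Longrightarrow> ueq sh br t s"
| trans: "ueq sh br s t \<Longrightarrow> ueq sh br t u \<Longrightarrow> ueq sh br s u"
| cong_add: "ueq sh br s s' \<Longrightarrow> ueq sh br t t' \<Longrightarrow> ueq sh br (Add s t) (Add s' t')"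
| cong_smul: "ueq sh br s s' \<Longrightarrow> ueq sh br (Smul c s) (Smul c s')"
| cong_mul: "ueq sh br s s' \<Longrightarrow> ueq sh br t t' \<Longrightarrow> ueq sh br (Mul s t) (Mul s' t')"
| add_assoc: "ueq sh br (Add (Add s t) u) (Add s (Add t u))"
| add_comm: "ueq sh br (Add s t) (Add t s)"
| add_zero: "ueq sh br (Add s Zero) s"
| add_neg: "ueq sh br (Add s (Smul (-1) s)) Zero"
| smul_add: "ueq sh br (Smul c (Add s t)) (Add (Smul c s) (Smul c t))"
| add_smul: "ueq sh br (Smul (c + d) s) (Add (Smul c s) (Smul d s))"
| smul_smul: "ueq sh br (Smul c (Smul d s)) (Smul (c * d) s)"
| smul_one: "ueq sh br (Smul 1 s) s"
| mul_assoc: "ueq sh br (Mul (Mul s t) u) (Mul s (Mul t u))"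
| one_mul: "ueq sh br (Mul One s) s"
| mul_one: "ueq sh br (Mul s One) s"
| distl: "ueq sh br (Mul s (Add t u)) (Add (Mul s t) (Mul s u))"
| distr: "ueq sh br (Mul (Add s t) u) (Add (Mul s u) (Mul t u))"
| smul_mul: "ueq sh br (Mul (Smul c s) t) (Smul c (Mul s t))"
| mul_smul: "ueq sh br (Mul s (Smul c t)) (Smul c (Mul s t))"
| gen_add: "ueq sh br (Gen (x + y)) (Add (Gen x) (Gen y))"
| gen_smul: "ueq sh br (Gen (sh c x)) (Smul c (Gen x))"
| lie: "ueq sh br (Gen (br x y)) (Add (Mul (Gen x) (Gen y)) (Smul (-1) (Mul (Gen y) (Gen x))))"

fun usum :: "('k, 'h) uterm list \<Rightarrow> ('k, 'h) uterm" where
  "usum [] = Zero"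
| "usum (t # ts) = Add t (usum ts)"

primrec ueps :: "('k::field, 'h) uterm \<Rightarrow> 'k" where
  "ueps (Gen x) = 0"
| "ueps One = 1"
| "ueps Zero = 0"
| "ueps (Add s t) = ueps s + ueps t"
| "ueps (Smul c s) = c * ueps s"
| "ueps (Mul s t) = ueps s * ueps t"

text \<open>Coproduct Delta (algebra morphism, elements of h primitive), represented by a
  formal sum of simple tensors: ucop t = [(a1,b1),...] stands for sum_i a_i \<otimes> b_i,
  i.e. the Sweedler sum t^(1) \<otimes> t^(2).\<close>
primrec ucop :: "('k::field, 'h) uterm \<Rightarrow> (('k, 'h) uterm \<times> ('k, 'h) uterm) list" where
  "ucop (Gen x) = [(Gen x, One), (One, Gen x)]"
| "ucop One = [(One, One)]"
| "ucop Zero = []"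
| "ucop (Add s t) = ucop s @ ucop t"
| "ucop (Smul c s) = map (\<lambda>(a, b). (Smul c a, b)) (ucop s)"
| "ucop (Mul s t) = concat (map (\<lambda>(a, b). map (\<lambda>(c, d). (Mul a c, Mul b d)) (ucop t)) (ucop s))"

text \<open>The extension of the post-Lie product st to U(h) (a known fact: it exists and is
  unique with these properties); S is any operation on terms that is well defined on U(h),
  bilinear, extends st on generators and satisfies the listed identities.\<close>
definition ustar_ext :: "('k::field \<Rightarrow> 'h::ab_group_add \<Rightarrow> 'h) \<Rightarrow> ('h \<Rightarrow> 'h \<Rightarrow> 'h) \<Rightarrow> ('h \<Rightarrow> 'h \<Rightarrow> 'h)
    \<Rightarrow> (('k, 'h) uterm \<Rightarrow> ('k, 'h) uterm \<Rightarrow> ('k, 'h) uterm) \<Rightarrow> bool" where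
  "ustar_ext sh br st S \<longleftrightarrow>
     (\<forall>f f' g g'. ueq sh br f f' \<longrightarrow> ueq sh br g g' \<longrightarrow> ueq sh br (S f g) (S f' g')) \<and>
     (\<forall>f f' g. ueq sh br (S (Add f f') g) (Add (S f g) (S f' g))) \<and>
     (\<forall>f g g'. ueq sh br (S f (Add g g')) (Add (S f g) (S f g'))) \<and>
     (\<forall>c f g. ueq sh br (S (Smul c f) g) (Smul c (S f g))) \<and>
     (\<forall>c f g. ueq sh br (S f (Smul c g)) (Smul c (S f g))) \<and>
     (\<forall>x y. ueq sh br (S (Gen x) (Gen y)) (Gen (st x y))) \<and>
     (\<forall>f g. ueps (S f g) = ueps f * ueps g) \<and>
     (\<forall>f. ueq sh br (S f One) f) \<and>
     (\<forall>f. ueq sh br (S One f) (Smul (ueps f) One)) \<and>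
     (\<forall>f g y. ueq sh br (S f (Mul g (Gen y)))
                 (Add (S (S f g) (Gen y)) (Smul (-1) (S f (S g (Gen y)))))) \<and>
     (\<forall>f g h. ueq sh br (S (Mul f g) h)
                 (usum (map (\<lambda>(a, b). Mul (S f a) (S g b)) (ucop h)))) \<and>
     (\<forall>f g h. ueq sh br (S (S f g) h)
                 (S f (usum (map (\<lambda>(a, b). Mul (S g a) b) (ucop h)))))"

definition U_alg_hom :: "('k::field \<Rightarrow> 'h::ab_group_add \<Rightarrow> 'h) \<Rightarrow> ('h \<Rightarrow> 'h \<Rightarrow> 'h)
    \<Rightarrow> ('k \<Rightarrow> 'a::ring \<Rightarrow> 'a) \<Rightarrow> (('k, 'h) uterm \<Rightarrow> ('k, 'a) unitz) \<Rightarrow> bool" where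
  "U_alg_hom sh br sa F \<longleftrightarrow>
     (\<forall>s t. ueq sh br s t \<longrightarrow> F s = F t) \<and>
     F One = uz_one \<and> F Zero = uz_zero \<and>
     (\<forall>s t. F (Add s t) = uz_add (F s) (F t)) \<and>
     (\<forall>c s. F (Smul c s) = uz_scale sa c (F s)) \<and>
     (\<forall>s t. F (Mul s t) = uz_mul sa (F s) (F t))"

end

theory Submission
  imports Defs
begin

primrec Fm :: "('k::field \<Rightarrow> 'a::ring \<Rightarrow> 'a) \<Rightarrow> ('h \<Rightarrow> 'a) \<Rightarrow> ('k, 'h) uterm \<Rightarrow> ('k, 'a) unitz" where
  "Fm sa phi (Gen x) = uz_incl (phi x)"
| "Fm sa phi One = uz_one"
| "Fm sa phi Zero = uz_zero"
| "Fm sa phi (Add s t) = uz_add (Fm sa phi s) (Fm sa phi t)"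
| "Fm sa phi (Smul c s) = uz_scale sa c (Fm sa phi s)"
| "Fm sa phi (Mul s t) = uz_mul sa (Fm sa phi s) (Fm sa phi t)"

primrec deg :: "('k, 'h) uterm \<Rightarrow> nat" where
  "deg (Gen x) = 1" | "deg One = 0" | "deg Zero = 0" | "deg (Add s t) = max (deg s) (deg t)"
| "deg (Smul c s) = deg s" | "deg (Mul s t) = deg s + deg t"

lemmas uz_defs = uz_add_def uz_mul_def uz_scale_def uz_one_def uz_zero_def uz_incl_def uz_rhd_def uz_sub_def

locale PL =
  fixes sh :: "'k::field \<Rightarrow> 'h::ab_group_add \<Rightarrow> 'h"
    and br st :: "'h \<Rightarrow> 'h \<Rightarrow> 'h"
    and sa :: "'k \<Rightarrow> 'a::ring \<Rightarrow> 'a"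
    and rhd :: "'a \<Rightarrow> 'a \<Rightarrow> 'a"
    and phi :: "'h \<Rightarrow> 'a"
  assumes vs: "vector_space sa"
    and mulL: "\<And>c x y. sa c (x * y) = sa c x * y"
    and mulR: "\<And>c x y. sa c (x * y) = x * sa c y"
    and rL_add: "\<And>x y z. rhd (x + y) z = rhd x z + rhd y z"
    and rR_add: "\<And>x y z. rhd z (x + y) = rhd z x + rhd z y"
    and rL_sc: "\<And>c x y. rhd (sa c x) y = sa c (rhd x y)"
    and rR_sc: "\<And>c x y. rhd y (sa c x) = sa c (rhd y x)"
    and phi_add: "\<And>x y. phi (x + y) = phi x + phi y"
    and phi_sc: "\<And>c x. phi (sh c x) = sa c (phi x)"
    and phi_br: "\<And>x y. phi (br x y) = phi x * phi y - phi y * phi x"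
begin

sublocale V: vector_space sa by (rule vs)

lemma mulL': "sa c x * y = sa c (x * y)" and mulR': "x * sa c y = sa c (x * y)"
  using mulL mulR by metis+

lemma rL0[simp]: "rhd 0 y = 0"
  using rL_add[of 0 0 y] by simp
lemma rR0[simp]: "rhd y 0 = 0"
  using rR_add[of y 0 0] by simp

abbreviation F where "F \<equiv> Fm sa phi"

lemmas ss = uz_defs mulL' mulR' algebra_simps rL_add rR_add rL_sc rR_sc

lemma F_ueq: "ueq sh br s t \<Longrightarrow> F s = F t"
  by (induction rule: ueq.induct) (auto simp: ss phi_add phi_sc phi_br)


lemma F_hom: "U_alg_hom sh br sa F"
  unfolding U_alg_hom_def using F_ueq by auto

lemma F_unique: "U_alg_hom sh br sa G \<Longrightarrow> (\<forall>x. G (Gen x) = uz_incl (phi x)) \<Longrightarrow> G t = F t"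
  by (induction t) (auto simp: U_alg_hom_def)

lemma F_in: "F t \<in> gen_subalg sa phi"
proof (induction t)
  case Zero
  have "uz_scale sa 0 uz_one \<in> gen_subalg sa phi" by (rule gen_subalg.scale[OF gen_subalg.one])
  then show ?case by (simp add: uz_defs)
qed (auto intro: gen_subalg.intros)

lemma fst_F: "fst (F t) = ueps t"
  by (induction t) (auto simp: uz_defs)

lemma F_usum: "F (usum ts) = uz_sum (map F ts)"
  by (induction ts) (auto simp: uz_sum_def)

lemma ueq_smul0: "ueq sh br (Smul 0 s) Zero"
proof -
  note ueq.trans[trans]
  let ?a = "Smul 0 s :: ('k,'h) uterm"
  have 1: "ueq sh br ?a (Add ?a ?a)" using ueq.add_smul[of sh br 0 0 s] by simp
  have "ueq sh br Zero (Add ?a (Smul (-1) ?a))" by (rule ueq.sym[OF ueq.add_neg])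
  also have "ueq sh br (Add ?a (Smul (-1) ?a)) (Add (Add ?a ?a) (Smul (-1) ?a))"
    by (rule ueq.cong_add[OF 1 ueq.refl])
  also have "ueq sh br \<dots> (Add ?a (Add ?a (Smul (-1) ?a)))" by (rule ueq.add_assoc)
  also have "ueq sh br \<dots> (Add ?a Zero)" by (rule ueq.cong_add[OF ueq.refl ueq.add_neg])
  also have "ueq sh br \<dots> ?a" by (rule ueq.add_zero)
  finally show ?thesis by (rule ueq.sym)
qed

end

locale PL2 = PL sh br st sa rhd phi
  for sh :: "'k::field \<Rightarrow> 'h::ab_group_add \<Rightarrow> 'h"
    and br st :: "'h \<Rightarrow> 'h \<Rightarrow> 'h"
    and sa :: "'k \<Rightarrow> 'a::ring \<Rightarrow> 'a"
    and rhd :: "'a \<Rightarrow> 'a \<Rightarrow> 'a"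
    and phi :: "'h \<Rightarrow> 'a" +
  fixes S :: "('k, 'h) uterm \<Rightarrow> ('k, 'h) uterm \<Rightarrow> ('k, 'h) uterm"
  assumes phi_st: "\<And>x y. phi (st x y) = rhd (phi x) (phi y)"
    and hyp1: "\<And>x y z. x \<in> gen_subalg sa phi \<Longrightarrow> y \<in> gen_subalg sa phi \<Longrightarrow>
       z \<in> uz_incl ` range phi \<Longrightarrow>
       uz_rhd sa rhd (uz_mul sa x y) z
         = uz_add (uz_mul sa (uz_rhd sa rhd x z) y) (uz_mul sa x (uz_rhd sa rhd y z))"
    and hyp2: "\<And>x y z. x \<in> gen_subalg sa phi \<Longrightarrow> y \<in> gen_subalg sa phi \<Longrightarrow>
       z \<in> uz_incl ` range phi \<Longrightarrow>
       uz_rhd sa rhd x (uz_mul sa y z)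
         = uz_sub (uz_rhd sa rhd (uz_rhd sa rhd x y) z) (uz_rhd sa rhd x (uz_rhd sa rhd y z))"
    and S_ext: "ustar_ext sh br st S"
begin

lemma S_cong: "ueq sh br f f' \<Longrightarrow> ueq sh br g g' \<Longrightarrow> ueq sh br (S f g) (S f' g')"
  using S_ext unfolding ustar_ext_def by auto
lemma S_addL: "ueq sh br (S (Add f f') g) (Add (S f g) (S f' g))"
  using S_ext unfolding ustar_ext_def by auto
lemma S_addR: "ueq sh br (S f (Add g g')) (Add (S f g) (S f g'))"
  using S_ext unfolding ustar_ext_def by auto
lemma S_scL: "ueq sh br (S (Smul c f) g) (Smul c (S f g))"
  using S_ext unfolding ustar_ext_def by auto
lemma S_scR: "ueq sh br (S f (Smul c g)) (Smul c (S f g))"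
  using S_ext unfolding ustar_ext_def by auto
lemma S_gen: "ueq sh br (S (Gen x) (Gen y)) (Gen (st x y))"
  using S_ext unfolding ustar_ext_def by auto
lemma S_one: "ueq sh br (S f One) f"
  using S_ext unfolding ustar_ext_def by auto
lemma S_oneL: "ueq sh br (S One f) (Smul (ueps f) One)"
  using S_ext unfolding ustar_ext_def by auto
lemma S_mulgen: "ueq sh br (S f (Mul g (Gen y)))
                 (Add (S (S f g) (Gen y)) (Smul (-1) (S f (S g (Gen y)))))"
  using S_ext unfolding ustar_ext_def by auto
lemma S_mul: "ueq sh br (S (Mul f g) h) (usum (map (\<lambda>(a, b). Mul (S f a) (S g b)) (ucop h)))"
  using S_ext unfolding ustar_ext_def by auto
lemma S_SS: "ueq sh br (S (S f g) h) (S f (usum (map (\<lambda>(a, b). Mul (S g a) b) (ucop h))))"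
  using S_ext unfolding ustar_ext_def by auto


definition P where "P f g \<longleftrightarrow> F (S f g) = uz_rhd sa rhd (F f) (F g)"
definition Q where "Q g \<longleftrightarrow> (\<forall>f. P f g)"

lemma FS_cong: "ueq sh br f f' \<Longrightarrow> ueq sh br g g' \<Longrightarrow> F (S f g) = F (S f' g')"
  by (rule F_ueq[OF S_cong])

lemma double_zero: assumes "p = uz_add p p" shows "p = uz_zero"
proof -
  have "fst p = fst p + fst p" "snd p = snd p + snd p"
    using assms by (metis uz_add_def fst_conv snd_conv)+
  then have "fst p = 0" "snd p = 0" by (metis add_cancel_right_right)+
  then show ?thesis by (simp add: uz_zero_def prod_eq_iff)
qed

lemma P_zeroL: "P Zero g"
proof -
  have "F (S Zero g) = F (S (Add Zero Zero) g)" by (rule FS_cong[OF ueq.sym[OF ueq.add_zero] ueq.refl])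
  also have "\<dots> = uz_add (F (S Zero g)) (F (S Zero g))" using F_ueq[OF S_addL] by simp
  finally have "F (S Zero g) = uz_zero" by (rule double_zero)
  then show ?thesis unfolding P_def by (simp add: uz_defs)
qed

lemma P_zeroR: "P f Zero"
proof -
  have "F (S f Zero) = F (S f (Add Zero Zero))" by (rule FS_cong[OF ueq.refl ueq.sym[OF ueq.add_zero]])
  also have "\<dots> = uz_add (F (S f Zero)) (F (S f Zero))" using F_ueq[OF S_addR] by simp
  finally have "F (S f Zero) = uz_zero" by (rule double_zero)
  then show ?thesis unfolding P_def by (simp add: uz_defs)
qed

lemma P_addL: "P f g \<Longrightarrow> P f' g \<Longrightarrow> P (Add f f') g"
  unfolding P_def using F_ueq[OF S_addL, of f f' g] by (auto simp: ss)
lemma P_addR: "P f g \<Longrightarrow> P f g' \<Longrightarrow> P f (Add g g')"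
  unfolding P_def using F_ueq[OF S_addR, of f g g'] by (auto simp: ss)
lemma P_scL: "P f g \<Longrightarrow> P (Smul c f) g"
  unfolding P_def using F_ueq[OF S_scL, of c f g] by (auto simp: ss)
lemma P_scR: "P f g \<Longrightarrow> P f (Smul c g)"
  unfolding P_def using F_ueq[OF S_scR, of f c g] by (auto simp: ss)
lemma P_oneR: "P f One"
  unfolding P_def using F_ueq[OF S_one, of f] by (cases "F f") (auto simp: ss)
lemma P_oneL: "P One g"
  unfolding P_def using F_ueq[OF S_oneL, of g] fst_F[of g] by (cases "F g") (auto simp: ss)


lemma FS_one: "F (S f One) = F f" by (rule F_ueq[OF S_one])

lemma uz_add_zero: "uz_add p uz_zero = p" by (simp add: uz_defs)

lemma P_gen: "P f (Gen y)"
proof (induction f)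
  case (Gen x)
  show ?case unfolding P_def using F_ueq[OF S_gen, of x y] by (simp add: ss phi_st)
next
  case One show ?case by (rule P_oneL)
next
  case Zero show ?case by (rule P_zeroL)
next
  case (Add f1 f2) then show ?case by (rule P_addL)
next
  case (Smul c f) then show ?case by (rule P_scL)
next
  case (Mul f1 f2)
  have z: "uz_incl (phi y) \<in> uz_incl ` range phi" by auto
  have "F (S (Mul f1 f2) (Gen y)) = F (usum (map (\<lambda>(a, b). Mul (S f1 a) (S f2 b)) (ucop (Gen y))))"
    by (rule F_ueq[OF S_mul])
  also have "\<dots> = uz_add (uz_mul sa (F (S f1 (Gen y))) (F f2)) (uz_mul sa (F f1) (F (S f2 (Gen y))))"
    by (simp add: FS_one uz_add_zero)
  also have "\<dots> = uz_rhd sa rhd (F (Mul f1 f2)) (F (Gen y))"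
    using Mul.IH hyp1[OF F_in F_in z, of f1 f2] by (simp add: P_def)
  finally show ?case unfolding P_def .
qed

lemma Q_ueq: "Q g \<Longrightarrow> ueq sh br g g' \<Longrightarrow> Q g'"
  unfolding Q_def P_def using FS_cong[OF ueq.refl] F_ueq by metis

lemma S_zeroL: "ueq sh br (S Zero g) Zero"
proof -
  note ueq.trans[trans]
  have "ueq sh br (S Zero g) (S (Smul 0 Zero) g)" by (rule S_cong[OF ueq.sym[OF ueq_smul0] ueq.refl])
  also have "ueq sh br \<dots> (Smul 0 (S Zero g))" by (rule S_scL)
  also have "ueq sh br \<dots> Zero" by (rule ueq_smul0)
  finally show ?thesis .
qed

lemma deg_lemma: "\<exists>t'. ueq sh br (S t (Gen y)) t' \<and> deg t' \<le> deg t"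
proof (induction t)
  case (Gen x) then show ?case using S_gen by fastforce
next
  case One then show ?case using S_oneL by fastforce
next
  case Zero then show ?case using S_zeroL by fastforce
next
  case (Add t1 t2)
  then obtain a b where "ueq sh br (S t1 (Gen y)) a" "deg a \<le> deg t1"
     "ueq sh br (S t2 (Gen y)) b" "deg b \<le> deg t2" by blast
  then show ?case using ueq.trans[OF S_addL ueq.cong_add] by fastforce
next
  case (Smul c t1)
  then obtain a where "ueq sh br (S t1 (Gen y)) a" "deg a \<le> deg t1" by blast
  then show ?case using ueq.trans[OF S_scL ueq.cong_smul] by fastforce
next
  case (Mul t1 t2)
  then obtain a b where ab: "ueq sh br (S t1 (Gen y)) a" "deg a \<le> deg t1"
     "ueq sh br (S t2 (Gen y)) b" "deg b \<le> deg t2" by blast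
  have "ueq sh br (S (Mul t1 t2) (Gen y)) (usum (map (\<lambda>(a, b). Mul (S t1 a) (S t2 b)) (ucop (Gen y))))"
    by (rule S_mul)
  moreover have "ueq sh br (usum (map (\<lambda>(a, b). Mul (S t1 a) (S t2 b)) (ucop (Gen y))))
     (Add (Mul a t2) (Add (Mul t1 b) Zero))"
    using ab by (auto intro!: ueq.cong_add ueq.cong_mul S_one ueq.refl)
  ultimately show ?case using ab by (intro exI[of _ "Add (Mul a t2) (Add (Mul t1 b) Zero)"])
      (auto intro: ueq.trans)
qed

lemma Q_add: "Q a \<Longrightarrow> Q b \<Longrightarrow> Q (Add a b)" unfolding Q_def by (auto intro: P_addR)
lemma Q_sc: "Q a \<Longrightarrow> Q (Smul c a)" unfolding Q_def by (auto intro: P_scR)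

lemma L: assumes IH: "\<And>t. deg t < n \<Longrightarrow> Q t"
  shows "deg g1 + deg g2 \<le> n \<Longrightarrow> Q g1 \<Longrightarrow> Q (Mul g1 g2)"
proof (induction g2 arbitrary: g1)
  case (Gen y)
  have z: "uz_incl (phi y) \<in> uz_incl ` range phi" by auto
  obtain t' where t': "ueq sh br (S g1 (Gen y)) t'" "deg t' \<le> deg g1" using deg_lemma by blast
  have "Q t'" using IH t' Gen.prems by simp
  then have Qs: "Q (S g1 (Gen y))" using Q_ueq ueq.sym[OF t'(1)] by blast
  show ?case unfolding Q_def
  proof
    fix f
    have "F (S f (Mul g1 (Gen y))) = uz_add (F (S (S f g1) (Gen y))) (uz_scale sa (-1) (F (S f (S g1 (Gen y)))))"
      using F_ueq[OF S_mulgen, of f g1 y] by simp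
    also have "\<dots> = uz_add (uz_rhd sa rhd (uz_rhd sa rhd (F f) (F g1)) (F (Gen y)))
        (uz_scale sa (-1) (uz_rhd sa rhd (F f) (uz_rhd sa rhd (F g1) (F (Gen y)))))"
      using P_gen[of "S f g1" y] P_gen[of g1 y] Qs Gen.prems unfolding Q_def P_def by simp
    also have "\<dots> = uz_rhd sa rhd (F f) (F (Mul g1 (Gen y)))"
      using hyp2[OF F_in F_in z, of f g1] by (simp add: uz_defs algebra_simps)
    finally show "P f (Mul g1 (Gen y))" unfolding P_def .
  qed
next
  case One
  then show ?case using Q_ueq[OF _ ueq.sym[OF ueq.mul_one]] by blast
next
  case Zero
  have "Q Zero" unfolding Q_def using P_zeroR by blast
  moreover have "ueq sh br (Mul g1 Zero) Zero"
  proof -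
    note ueq.trans[trans]
    have "ueq sh br (Mul g1 Zero) (Mul g1 (Smul 0 Zero))" by (rule ueq.cong_mul[OF ueq.refl ueq.sym[OF ueq_smul0]])
    also have "ueq sh br \<dots> (Smul 0 (Mul g1 Zero))" by (rule ueq.mul_smul)
    also have "ueq sh br \<dots> Zero" by (rule ueq_smul0)
    finally show ?thesis .
  qed
  ultimately show ?case using Q_ueq ueq.sym by blast
next
  case (Add a b)
  then have "Q (Add (Mul g1 a) (Mul g1 b))" by (auto intro: Q_add)
  then show ?case using Q_ueq ueq.sym[OF ueq.distl] by blast
next
  case (Smul c a)
  then have "Q (Smul c (Mul g1 a))" by (auto intro: Q_sc)
  then show ?case using Q_ueq ueq.sym[OF ueq.mul_smul] by blast
next
  case (Mul a b)
  have "Q (Mul g1 a)" using Mul by auto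
  then have "Q (Mul (Mul g1 a) b)" using Mul by auto
  then show ?case using Q_ueq ueq.mul_assoc by blast
qed

lemma Q_all: "Q g"
proof -
  have "\<forall>g. deg g \<le> n \<longrightarrow> Q g" for n
  proof (induction n rule: less_induct)
    case (less n)
    show ?case
    proof (intro allI impI)
      fix g :: "('k,'h) uterm" assume "deg g \<le> n"
      then show "Q g"
      proof (induction g)
        case (Gen x) then show ?case unfolding Q_def using P_gen by blast
      next
        case One then show ?case unfolding Q_def using P_oneR by blast
      next
        case Zero then show ?case unfolding Q_def using P_zeroR by blast
      next
        case (Add a b) then show ?case by (auto intro: Q_add)
      next
        case (Smul c a) then show ?case by (auto intro: Q_sc)
      next
        case (Mul a b)
        then have "Q a" by auto
        then show ?case using L[of n a b] less Mul.prems by auto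
      qed
    qed
  qed
  then show ?thesis by blast
qed


lemma FS: "F (S f g) = uz_rhd sa rhd (F f) (F g)"
  using Q_all unfolding Q_def P_def by blast

lemma part2: "uz_rhd sa rhd (uz_mul sa (F f) (F g)) (F h)
   = uz_sum (map (\<lambda>(a, b). uz_mul sa (uz_rhd sa rhd (F f) (F a)) (uz_rhd sa rhd (F g) (F b))) (ucop h))"
proof -
  have "uz_rhd sa rhd (uz_mul sa (F f) (F g)) (F h) = F (S (Mul f g) h)" by (simp add: FS)
  also have "\<dots> = F (usum (map (\<lambda>(a, b). Mul (S f a) (S g b)) (ucop h)))" by (rule F_ueq[OF S_mul])
  finally show ?thesis by (simp add: F_usum o_def split_def FS)
qed

lemma part3: "uz_rhd sa rhd (uz_rhd sa rhd (F f) (F g)) (F h)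
   = uz_rhd sa rhd (F f) (uz_sum (map (\<lambda>(a, b). uz_mul sa (uz_rhd sa rhd (F g) (F a)) (F b)) (ucop h)))"
proof -
  have "uz_rhd sa rhd (uz_rhd sa rhd (F f) (F g)) (F h) = F (S (S f g) h)" by (simp add: FS)
  also have "\<dots> = F (S f (usum (map (\<lambda>(a, b). Mul (S g a) b) (ucop h))))" by (rule F_ueq[OF S_SS])
  finally show ?thesis by (simp add: F_usum o_def split_def FS)
qed

end

theorem theorem3p6:
  fixes sh :: "'k::field \<Rightarrow> 'h::ab_group_add \<Rightarrow> 'h"
    and br st :: "'h \<Rightarrow> 'h \<Rightarrow> 'h"
    and sa :: "'k \<Rightarrow> 'a::ring \<Rightarrow> 'a"
    and rhd :: "'a \<Rightarrow> 'a \<Rightarrow> 'a"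
    and phi :: "'h \<Rightarrow> 'a"
    and S :: "('k, 'h) uterm \<Rightarrow> ('k, 'h) uterm \<Rightarrow> ('k, 'h) uterm"
  assumes postlie: "right_post_lie sh br st"
    and alg: "nonunital_algebra sa"
    and rhd_bilin: "bilin sa sa sa rhd"
    and phi_lin: "Vector_Spaces.linear sh sa phi"
    and phi_br: "\<And>x y. phi (br x y) = phi x * phi y - phi y * phi x"
    and phi_st: "\<And>x y. phi (st x y) = rhd (phi x) (phi y)"
    and hyp1: "\<And>x y z. x \<in> gen_subalg sa phi \<Longrightarrow> y \<in> gen_subalg sa phi \<Longrightarrow>
       z \<in> uz_incl ` range phi \<Longrightarrow>
       uz_rhd sa rhd (uz_mul sa x y) z
         = uz_add (uz_mul sa (uz_rhd sa rhd x z) y) (uz_mul sa x (uz_rhd sa rhd y z))"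
    and hyp2: "\<And>x y z. x \<in> gen_subalg sa phi \<Longrightarrow> y \<in> gen_subalg sa phi \<Longrightarrow>
       z \<in> uz_incl ` range phi \<Longrightarrow>
       uz_rhd sa rhd x (uz_mul sa y z)
         = uz_sub (uz_rhd sa rhd (uz_rhd sa rhd x y) z) (uz_rhd sa rhd x (uz_rhd sa rhd y z))"
    and S_ext: "ustar_ext sh br st S"
  shows "(\<exists>!F. U_alg_hom sh br sa F \<and> (\<forall>x. F (Gen x) = uz_incl (phi x))) \<and>
    (\<forall>F. U_alg_hom sh br sa F \<and> (\<forall>x. F (Gen x) = uz_incl (phi x)) \<longrightarrow>
      (\<forall>f g. F (S f g) = uz_rhd sa rhd (F f) (F g)) \<and>
      (\<forall>f g h. uz_rhd sa rhd (uz_mul sa (F f) (F g)) (F h)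
          = uz_sum (map (\<lambda>(a, b). uz_mul sa (uz_rhd sa rhd (F f) (F a)) (uz_rhd sa rhd (F g) (F b)))
                        (ucop h))) \<and>
      (\<forall>f g h. uz_rhd sa rhd (uz_rhd sa rhd (F f) (F g)) (F h)
          = uz_rhd sa rhd (F f)
              (uz_sum (map (\<lambda>(a, b). uz_mul sa (uz_rhd sa rhd (F g) (F a)) (F b)) (ucop h)))))"
proof -
  have alg': "vector_space sa \<and> (\<forall>c x y. sa c (x * y) = sa c x * y \<and> sa c (x * y) = x * sa c y)"
    using alg unfolding nonunital_algebra_def .
  have vs: "vector_space sa" using alg' by blast
  have mul: "\<And>c x y. sa c (x * y) = sa c x * y \<and> sa c (x * y) = x * sa c y"
    using alg' by blast
  have lr: "\<And>x. Vector_Spaces.linear sa sa (rhd x)" and ll: "\<And>y. Vector_Spaces.linear sa sa (\<lambda>x. rhd x y)"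
    using rhd_bilin unfolding bilin_def by auto
  have mL: "\<And>c x y. sa c (x * y) = sa c x * y" and mR: "\<And>c x y. sa c (x * y) = x * sa c y"
    using mul by blast+
  have rla: "\<And>x y z. rhd (x + y) z = rhd x z + rhd y z" using ll unfolding Vector_Spaces.linear_iff by blast
  have rra: "\<And>x y z. rhd z (x + y) = rhd z x + rhd z y" using lr unfolding Vector_Spaces.linear_iff by blast
  have rls: "\<And>c x y. rhd (sa c x) y = sa c (rhd x y)" using ll unfolding Vector_Spaces.linear_iff by blast
  have rrs: "\<And>c x y. rhd y (sa c x) = sa c (rhd y x)" using lr unfolding Vector_Spaces.linear_iff by blast
  have pa: "\<And>x y. phi (x + y) = phi x + phi y" using phi_lin unfolding Vector_Spaces.linear_iff by blast
  have ps: "\<And>c x. phi (sh c x) = sa c (phi x)" using phi_lin unfolding Vector_Spaces.linear_iff by blast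
  interpret PL2 sh br st sa rhd phi S
    by (intro PL2.intro PL.intro PL2_axioms.intro) (fact vs mL mR rla rra rls rrs pa ps phi_br phi_st hyp1 hyp2 S_ext)+
  have uniq: "G = Fm sa phi" if "U_alg_hom sh br sa G" "\<forall>x. G (Gen x) = uz_incl (phi x)" for G
    using F_unique[OF that] by blast
  have ex: "\<exists>!F. U_alg_hom sh br sa F \<and> (\<forall>x. F (Gen x) = uz_incl (phi x))"
  proof (rule ex1I[of _ "Fm sa phi"])
    show "U_alg_hom sh br sa (Fm sa phi) \<and> (\<forall>x. Fm sa phi (Gen x) = uz_incl (phi x))"
      using F_hom by simp
  next
    fix G assume "U_alg_hom sh br sa G \<and> (\<forall>x. G (Gen x) = uz_incl (phi x))"
    then show "G = Fm sa phi" using uniq by blast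
  qed
  have rest: "(\<forall>f g. G (S f g) = uz_rhd sa rhd (G f) (G g)) \<and>
      (\<forall>f g h. uz_rhd sa rhd (uz_mul sa (G f) (G g)) (G h)
          = uz_sum (map (\<lambda>(a, b). uz_mul sa (uz_rhd sa rhd (G f) (G a)) (uz_rhd sa rhd (G g) (G b)))
                        (ucop h))) \<and>
      (\<forall>f g h. uz_rhd sa rhd (uz_rhd sa rhd (G f) (G g)) (G h)
          = uz_rhd sa rhd (G f)
              (uz_sum (map (\<lambda>(a, b). uz_mul sa (uz_rhd sa rhd (G g) (G a)) (G b)) (ucop h))))"
    if G: "U_alg_hom sh br sa G \<and> (\<forall>x. G (Gen x) = uz_incl (phi x))" for G
  proof -
    have e: "G = Fm sa phi" using uniq G by blast
    show ?thesis unfolding e using FS part2 part3 by blast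
  qed
  show ?thesis using ex rest by blast
qed

end
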